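(* Let $p$ be a prime, $k\ge1$, $\Gamma=\mathbb{Z}_p\,\mathrm{wr}\,\mathbb{Z}^k=\Sigma\rtimes_\alpha\mathbb{Z}^k$, and let $\phi:\Gamma\to\Gamma$ be an automorphism with restriction $\phi'=\phi|_\Sigma$ and induced automorphism $\overline{\phi}:\mathbb{Z}^k\to\mathbb{Z}^k$ on $\Gamma/\Sigma\cong\mathbb{Z}^k$, such that $\phi'(\delta_0)=m\,\delta_0$ for some $0\ne m\in\mathbb{Z}_p$ (so $\phi'(\delta_x)=m\,\delta_{\overline{\phi}(x)}$ for all $x$). Let $x\in\mathbb{Z}^k$ have infinite $\overline{\phi}$-orbit, and let $B=\bigoplus_{n\in\mathbb{Z}}A_{\overline{\phi}^n(x)}\subset\Sigma$, which is invariant under $1-\phi'$. Then the restriction of $1-\phi'$ to $B$ is not an epimorphism onto $B$.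
   Context: $\mathbb{Z}_p\,\mathrm{wr}\,\mathbb{Z}^k$ is $\Sigma\rtimes_\alpha\mathbb{Z}^k$ with $\Sigma=\bigoplus_{x\in\mathbb{Z}^k}A_x$ (finitely supported), $A_x\cong\mathbb{Z}_p$ generated by $\delta_x$, and $\alpha(y)(\delta_x)=\delta_{y+x}$. $\Sigma$ is characteristic (torsion subgroup). Here $1-\phi'$ denotes the endomorphism $h\mapsto h-\phi'(h)$ of the abelian group $\Sigma$. *)

theory Defs
  imports "HOL-Algebra.Group" "HOL-Computational_Algebra.Primes"
begin

text \<open>Z^k is modelled as 'k \<Rightarrow> int for a finite type 'k (so k = CARD('k) \<ge> 1).
  Z_p is modelled as the integers {0..<p} with arithmetic mod p.
  Sigma = finitely supported functions Z^k \<Rightarrow> Z_p.\<close>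

type_synonym 'k zk = "'k \<Rightarrow> int"
type_synonym 'k sig = "'k zk \<Rightarrow> int"

definition zadd :: "'k zk \<Rightarrow> 'k zk \<Rightarrow> 'k zk" where
  "zadd y1 y2 = (\<lambda>i. y1 i + y2 i)"

definition zzero :: "'k zk" where
  "zzero = (\<lambda>i. 0)"

definition Sig :: "int \<Rightarrow> 'k sig set" where
  "Sig p = {f. (\<forall>z. f z \<in> {0..<p}) \<and> finite {z. f z \<noteq> 0}}"

definition sadd :: "int \<Rightarrow> 'k sig \<Rightarrow> 'k sig \<Rightarrow> 'k sig" where
  "sadd p f g = (\<lambda>z. (f z + g z) mod p)"

definition ssub :: "int \<Rightarrow> 'k sig \<Rightarrow> 'k sig \<Rightarrow> 'k sig" where
  "ssub p f g = (\<lambda>z. (f z - g z) mod p)"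

definition sdelta :: "int \<Rightarrow> 'k zk \<Rightarrow> 'k sig" where
  "sdelta m x = (\<lambda>z. if z = x then m else 0)"

text \<open>alpha(y)(f) = f(\<cdot> - y), so that alpha(y)(delta_x) = delta_(y+x).\<close>
definition shift :: "'k zk \<Rightarrow> 'k sig \<Rightarrow> 'k sig" where
  "shift y f = (\<lambda>z. f (\<lambda>i. z i - y i))"

definition WR :: "int \<Rightarrow> ('k sig \<times> 'k zk) monoid" where
  "WR p = \<lparr> carrier = Sig p \<times> UNIV,
            monoid.mult = (\<lambda>(f1, y1) (f2, y2). (sadd p f1 (shift y1 f2), zadd y1 y2)),
            monoid.one = (\<lambda>z. 0, zzero) \<rparr>"

definition phi_res :: "('k sig \<times> 'k zk \<Rightarrow> 'k sig \<times> 'k zk) \<Rightarrow> 'k sig \<Rightarrow> 'k sig" where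
  "phi_res \<phi> h = fst (\<phi> (h, zzero))"

text \<open>Induced map on Gamma/Sigma \<cong> Z^k (the quotient map is snd).\<close>
definition phi_bar :: "('k sig \<times> 'k zk \<Rightarrow> 'k sig \<times> 'k zk) \<Rightarrow> 'k zk \<Rightarrow> 'k zk" where
  "phi_bar \<phi> y = snd (\<phi> (\<lambda>z. 0, y))"

text \<open>Z-orbit {f^n(x) | n \<in> Z} of a bijection f.\<close>
definition zorbit :: "('a \<Rightarrow> 'a) \<Rightarrow> 'a \<Rightarrow> 'a set" where
  "zorbit f x = {y. \<exists>n::nat. (f ^^ n) x = y \<or> (f ^^ n) y = x}"

definition Bsub :: "int \<Rightarrow> 'k zk set \<Rightarrow> 'k sig set" where
  "Bsub p Orb = {h \<in> Sig p. {z. h z \<noteq> 0} \<subseteq> Orb}"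

end

theory Submission
  imports Defs
begin

lemma WR_mult: "a \<otimes>\<^bsub>WR p\<^esub> b = (sadd p (fst a) (shift (snd a) (fst b)), zadd (snd a) (snd b))"
  by (cases a, cases b) (simp add: WR_def)
lemma WR_one: "\<one>\<^bsub>WR p\<^esub> = (\<lambda>z. 0, zzero)" by (simp add: WR_def)
lemma WR_carrier: "carrier (WR p) = Sig p \<times> UNIV" by (simp add: WR_def)

lemma shift_zero[simp]: "shift zzero f = f" by (simp add: shift_def zzero_def)
lemma zadd_zero[simp]: "zadd zzero y = y" "zadd y zzero = y" by (simp_all add: zadd_def zzero_def)

lemma Sig_zero: "0 < p \<Longrightarrow> (\<lambda>z. 0) \<in> Sig p" by (simp add: Sig_def)
lemma Sig_sdelta: "0 \<le> c \<Longrightarrow> c < p \<Longrightarrow> sdelta c x \<in> Sig p"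
  unfolding Sig_def sdelta_def
  by (auto intro: finite_subset[of _ "{x}"])

lemma Sig_sadd: "0 < p \<Longrightarrow> f \<in> Sig p \<Longrightarrow> g \<in> Sig p \<Longrightarrow> sadd p f g \<in> Sig p"
  unfolding Sig_def sadd_def
  by (auto intro: finite_subset[of _ "{z. f z \<noteq> 0} \<union> {z. g z \<noteq> 0}"])

lemma Sig_shift: "g \<in> Sig p \<Longrightarrow> shift y g \<in> Sig p"
proof -
  assume g: "g \<in> Sig p"
  have "{z. shift y g z \<noteq> 0} \<subseteq> (\<lambda>w i. w i + y i) ` {w. g w \<noteq> 0}"
  proof
    fix z assume "z \<in> {z. shift y g z \<noteq> 0}"
    then have "g (\<lambda>i. z i - y i) \<noteq> 0" by (simp add: shift_def)
    moreover have "z = (\<lambda>i. (\<lambda>i. z i - y i) i + y i)" by simp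
    ultimately show "z \<in> (\<lambda>w i. w i + y i) ` {w. g w \<noteq> 0}"
      by (intro image_eqI[where x="\<lambda>i. z i - y i"]) auto
  qed
  moreover have "finite {w. g w \<noteq> 0}" using g by (simp add: Sig_def)
  ultimately have "finite {z. shift y g z \<noteq> 0}" using finite_subset by blast
  then show ?thesis using g by (simp add: Sig_def shift_def)
qed

lemma WR_closed: "0 < p \<Longrightarrow> a \<in> carrier (WR p) \<Longrightarrow> b \<in> carrier (WR p) \<Longrightarrow> a \<otimes>\<^bsub>WR p\<^esub> b \<in> carrier (WR p)"
  by (auto simp: WR_carrier WR_mult intro!: Sig_sadd Sig_shift)

fun P :: "int \<Rightarrow> nat \<Rightarrow> ('k sig \<times> 'k zk) \<Rightarrow> ('k sig \<times> 'k zk)" where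
  "P p 0 a = \<one>\<^bsub>WR p\<^esub>"
| "P p (Suc n) a = a \<otimes>\<^bsub>WR p\<^esub> P p n a"

lemma P_carrier: "0 < p \<Longrightarrow> a \<in> carrier (WR p) \<Longrightarrow> P p n a \<in> carrier (WR p)"
  by (induction n) (auto simp: WR_one WR_carrier Sig_zero intro: WR_closed[unfolded WR_carrier])

lemma P_snd: "snd (P p n a) = (\<lambda>i. int n * snd a i)"
  by (induction n) (auto simp: WR_one WR_mult zzero_def zadd_def algebra_simps)

lemma P_fst0: "fst (P p n (g, zzero)) = (\<lambda>w. (int n * g w) mod p)"
proof (induction n)
  case 0 then show ?case by (simp add: WR_one)
next
  case (Suc n)
  have s: "snd (P p n (g, zzero)) = zzero" by (simp add: P_snd zzero_def)
  show ?case using Suc s by (simp add: WR_mult sadd_def mod_add_right_eq algebra_simps)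
qed

lemma P_fst_zf: "fst (P p n (\<lambda>z. 0, y)) = (\<lambda>z. 0)"
  by (induction n) (auto simp: WR_one WR_mult sadd_def shift_def)

lemma double_mod: "0 \<le> (a::int) \<Longrightarrow> a < p \<Longrightarrow> a = (a + a) mod p \<Longrightarrow> a = 0"
proof (cases "a + a < p")
  case True
  assume "0 \<le> a" "a = (a + a) mod p"
  then show ?thesis using True by simp
next
  case False
  assume h: "0 \<le> a" "a < p" "a = (a + a) mod p"
  have "(a + a) mod p = (a + a - p) mod p" by simp
  also have "\<dots> = a + a - p" using h False by (intro mod_pos_pos_trivial) auto
  finally show ?thesis using h by simp
qed

lemma mod_cancel_aux: "(a + (b::int)) mod p = (a + c) mod p \<Longrightarrow> b mod p = c mod p"
  by (metis add_diff_cancel_left' mod_diff_left_eq)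

lemma neg_mod_dvd: "(0 - (a mod p)) mod p = (0::int) \<Longrightarrow> p dvd a"
  by (metis diff_0 dvd_minus_iff mod_0_imp_dvd mod_diff_right_eq)

context
  fixes p m :: int and \<phi> :: "('k::finite) sig \<times> 'k zk \<Rightarrow> 'k sig \<times> 'k zk"
  assumes pr: "prime p" and iso: "\<phi> \<in> iso (WR p) (WR p)"
    and mp: "m \<in> {1..<p}" and d0: "phi_res \<phi> (sdelta 1 zzero) = sdelta m zzero"
begin

lemma p_gt1: "1 < p" using pr prime_gt_1_int by blast
lemma p_pos: "0 < p" using p_gt1 by simp

lemma hom: "\<phi> \<in> hom (WR p) (WR p)" using iso by (simp add: iso_def)
lemma phi_car: "a \<in> carrier (WR p) \<Longrightarrow> \<phi> a \<in> carrier (WR p)" using hom by (auto simp: hom_def)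
lemma phi_mult: "a \<in> carrier (WR p) \<Longrightarrow> b \<in> carrier (WR p) \<Longrightarrow>
   \<phi> (a \<otimes>\<^bsub>WR p\<^esub> b) = \<phi> a \<otimes>\<^bsub>WR p\<^esub> \<phi> b"
  using hom by (auto simp: hom_def)
lemma phi_inj: "inj_on \<phi> (carrier (WR p))" using iso by (simp add: iso_def bij_betw_def)

lemma one_car: "\<one>\<^bsub>WR p\<^esub> \<in> carrier (WR p)"
  using p_pos by (simp add: WR_one WR_carrier Sig_zero)

lemma phi_one: "\<phi> \<one>\<^bsub>WR p\<^esub> = \<one>\<^bsub>WR p\<^esub>"
proof -
  have oo: "\<one>\<^bsub>WR p\<^esub> \<otimes>\<^bsub>WR p\<^esub> \<one>\<^bsub>WR p\<^esub> = \<one>\<^bsub>WR p\<^esub>"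
    by (simp add: WR_one WR_mult sadd_def shift_def)
  obtain g y where gy: "\<phi> \<one>\<^bsub>WR p\<^esub> = (g, y)" by fastforce
  have car: "(g, y) \<in> carrier (WR p)" using phi_car[OF one_car] gy by simp
  have "\<phi> \<one>\<^bsub>WR p\<^esub> = \<phi> \<one>\<^bsub>WR p\<^esub> \<otimes>\<^bsub>WR p\<^esub> \<phi> \<one>\<^bsub>WR p\<^esub>"
    using phi_mult[OF one_car one_car] oo by metis
  then have "(g, y) = (g, y) \<otimes>\<^bsub>WR p\<^esub> (g, y)" using gy by simp
  then have e1: "y = zadd y y" and e2: "g = sadd p g (shift y g)" by (simp_all add: WR_mult)
  have yz: "y = zzero"
  proof
    fix i show "y i = zzero i" using fun_cong[OF e1, of i] by (simp add: zadd_def zzero_def)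
  qed
  have "g = (\<lambda>z. 0)"
  proof
    fix w
    have "g w = (g w + g w) mod p" using fun_cong[OF e2, of w] yz by (simp add: sadd_def)
    moreover have "0 \<le> g w \<and> g w < p" using car by (simp add: WR_carrier Sig_def)
    ultimately show "g w = 0" using double_mod by blast
  qed
  then show ?thesis using gy yz by (simp add: WR_one)
qed

lemma phi_P: "a \<in> carrier (WR p) \<Longrightarrow> \<phi> (P p n a) = P p n (\<phi> a)"
  by (induction n) (simp_all add: phi_one phi_mult P_carrier p_pos)

lemma P_p_one: "P p (nat p) (g, zzero) = \<one>\<^bsub>WR p\<^esub>"
proof -
  have "fst (P p (nat p) (g, zzero)) = (\<lambda>z. 0)" using p_pos by (simp add: P_fst0)
  moreover have "snd (P p (nat p) (g, zzero)) = zzero" by (simp add: P_snd zzero_def)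
  ultimately show ?thesis by (simp add: WR_one prod_eq_iff)
qed

lemma P_one_snd: "P p (nat p) (g, y) = \<one>\<^bsub>WR p\<^esub> \<Longrightarrow> y = zzero"
proof
  fix i assume "P p (nat p) (g, y) = \<one>\<^bsub>WR p\<^esub>"
  then have "snd (P p (nat p) (g, y)) i = 0" by (simp add: WR_one zzero_def)
  then have "p * y i = 0" using p_pos by (simp add: P_snd)
  then show "y i = zzero i" using p_pos by (simp add: zzero_def)
qed

lemma phi_Sig: "h \<in> Sig p \<Longrightarrow> \<phi> (h, zzero) = (phi_res \<phi> h, zzero)"
proof -
  assume h: "h \<in> Sig p"
  obtain g y where gy: "\<phi> (h, zzero) = (g, y)" by fastforce
  have "(h, zzero) \<in> carrier (WR p)" using h by (simp add: WR_carrier)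
  then have "P p (nat p) (g, y) = \<phi> (P p (nat p) (h, zzero))"
    using phi_P[of "(h, zzero)" "nat p"] gy by simp
  also have "\<dots> = \<one>\<^bsub>WR p\<^esub>" using P_p_one[of h] phi_one by metis
  finally have "P p (nat p) (g, y) = \<one>\<^bsub>WR p\<^esub>" .
  then have "y = zzero" by (rule P_one_snd)
  then show ?thesis using gy by (simp add: phi_res_def)
qed

lemma phi_res_Sig: "h \<in> Sig p \<Longrightarrow> phi_res \<phi> h \<in> Sig p"
proof -
  assume h: "h \<in> Sig p"
  have "(h, zzero) \<in> carrier (WR p)" using h by (simp add: WR_carrier)
  then have "\<phi> (h, zzero) \<in> carrier (WR p)" by (rule phi_car)
  then show ?thesis by (simp add: phi_Sig[OF h] WR_carrier)
qed

lemma phi_res_add: "h1 \<in> Sig p \<Longrightarrow> h2 \<in> Sig p \<Longrightarrow>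
   phi_res \<phi> (sadd p h1 h2) = sadd p (phi_res \<phi> h1) (phi_res \<phi> h2)"
proof -
  assume h1: "h1 \<in> Sig p" and h2: "h2 \<in> Sig p"
  have c1: "(h1, zzero) \<in> carrier (WR p)" using h1 by (simp add: WR_carrier)
  have c2: "(h2, zzero) \<in> carrier (WR p)" using h2 by (simp add: WR_carrier)
  have "(sadd p h1 h2, zzero) = (h1, zzero) \<otimes>\<^bsub>WR p\<^esub> (h2, zzero)" by (simp add: WR_mult)
  then have "phi_res \<phi> (sadd p h1 h2) = fst (\<phi> (h1, zzero) \<otimes>\<^bsub>WR p\<^esub> \<phi> (h2, zzero))"
    using phi_mult[OF c1 c2] by (simp add: phi_res_def)
  then show ?thesis using phi_Sig[OF h1] phi_Sig[OF h2] by (simp add: WR_mult)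
qed

lemma f_inj: "inj (phi_bar \<phi>)"
proof
  fix z1 z2 assume eq: "phi_bar \<phi> z1 = phi_bar \<phi> z2"
  define d where "d = (\<lambda>i. z2 i - z1 i)"
  have cz: "\<And>z. ((\<lambda>w. 0), z) \<in> carrier (WR p)" using p_pos by (simp add: WR_carrier Sig_zero)
  have "((\<lambda>w. 0), z2) = ((\<lambda>w. 0), z1) \<otimes>\<^bsub>WR p\<^esub> ((\<lambda>w. 0), d)"
    by (simp add: WR_mult sadd_def shift_def zadd_def d_def)
  then have "\<phi> ((\<lambda>w. 0), z2) = \<phi> ((\<lambda>w. 0), z1) \<otimes>\<^bsub>WR p\<^esub> \<phi> ((\<lambda>w. 0), d)"
    using phi_mult[OF cz cz] by simp
  then have "phi_bar \<phi> z2 = zadd (phi_bar \<phi> z1) (snd (\<phi> ((\<lambda>w. 0), d)))"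
    by (simp add: WR_mult phi_bar_def)
  then have sd: "snd (\<phi> ((\<lambda>w. 0), d)) = zzero" using eq
    by (auto simp: zadd_def zzero_def fun_eq_iff)
  obtain g where g: "\<phi> ((\<lambda>w. 0), d) = (g, zzero)" using sd by (metis prod.collapse)
  have "\<phi> (P p (nat p) ((\<lambda>w. 0), d)) = \<one>\<^bsub>WR p\<^esub>"
    using phi_P[OF cz] g P_p_one by simp
  then have "\<phi> (P p (nat p) ((\<lambda>w. 0), d)) = \<phi> \<one>\<^bsub>WR p\<^esub>" using phi_one by simp
  then have "P p (nat p) ((\<lambda>w. 0), d) = \<one>\<^bsub>WR p\<^esub>"
    by (rule inj_onD[OF phi_inj _ P_carrier[OF p_pos cz] one_car])
  then have "d = zzero" by (rule P_one_snd)
  then show "z1 = z2" by (auto simp: d_def zzero_def fun_eq_iff)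
qed

lemma phi_delta1: "phi_res \<phi> (sdelta 1 z) = sdelta m (phi_bar \<phi> z)"
proof -
  define D0 where "D0 = (sdelta 1 zzero :: 'k sig)"
  define Dz where "Dz = (sdelta 1 z :: 'k sig)"
  have D0s: "D0 \<in> Sig p" using p_gt1 by (simp add: D0_def Sig_sdelta)
  have Dzs: "Dz \<in> Sig p" using p_gt1 by (simp add: Dz_def Sig_sdelta)
  have cz: "((\<lambda>w. 0), z) \<in> carrier (WR p)" using p_pos by (simp add: WR_carrier Sig_zero)
  have c0: "(D0, zzero) \<in> carrier (WR p)" using D0s by (simp add: WR_carrier)
  have cd: "(Dz, zzero) \<in> carrier (WR p)" using Dzs by (simp add: WR_carrier)
  have sh: "shift z D0 = Dz"
    by (auto simp: shift_def D0_def Dz_def sdelta_def zzero_def fun_eq_iff)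
  have E: "((\<lambda>w. 0), z) \<otimes>\<^bsub>WR p\<^esub> (D0, zzero) = (Dz, zzero) \<otimes>\<^bsub>WR p\<^esub> ((\<lambda>w. 0), z)"
    using p_gt1 by (auto simp: WR_mult sh sadd_def shift_def Dz_def D0_def sdelta_def zzero_def zadd_def fun_eq_iff)
  obtain g y where gy: "\<phi> ((\<lambda>w. 0), z) = (g, y)" by fastforce
  have y: "y = phi_bar \<phi> z" using gy by (simp add: phi_bar_def)
  have gs: "g \<in> Sig p" using phi_car[OF cz] gy by (simp add: WR_carrier)
  have R: "phi_res \<phi> Dz \<in> Sig p" using phi_res_Sig[OF Dzs] .
  have "\<phi> ((\<lambda>w. 0), z) \<otimes>\<^bsub>WR p\<^esub> \<phi> (D0, zzero) = \<phi> (Dz, zzero) \<otimes>\<^bsub>WR p\<^esub> \<phi> ((\<lambda>w. 0), z)"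
    using E phi_mult[OF cz c0] phi_mult[OF cd cz] by simp
  then have E2: "sadd p g (shift y (sdelta m zzero)) = sadd p (phi_res \<phi> Dz) g"
    using phi_Sig[OF D0s] phi_Sig[OF Dzs] gy d0 by (simp add: WR_mult D0_def)
  have sh2: "shift y (sdelta m zzero) = sdelta m y"
    by (auto simp: shift_def sdelta_def zzero_def fun_eq_iff)
  show ?thesis
  proof
    fix w
    have "(g w + sdelta m y w) mod p = (g w + phi_res \<phi> Dz w) mod p"
      using fun_cong[OF E2, of w] sh2 by (simp add: sadd_def add.commute)
    then have "sdelta m y w mod p = phi_res \<phi> Dz w mod p" by (rule mod_cancel_aux)
    moreover have "0 \<le> phi_res \<phi> Dz w \<and> phi_res \<phi> Dz w < p" using R by (simp add: Sig_def)
    moreover have "0 \<le> sdelta m y w \<and> sdelta m y w < p" using mp by (simp add: sdelta_def)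
    ultimately show "phi_res \<phi> (sdelta 1 z) w = sdelta m (phi_bar \<phi> z) w"
      using y by (simp add: Dz_def)
  qed
qed

lemma phi_delta: "0 \<le> c \<Longrightarrow> c < p \<Longrightarrow>
   phi_res \<phi> (sdelta c z) = (\<lambda>w. if w = phi_bar \<phi> z then (c * m) mod p else 0)"
proof -
  assume c: "0 \<le> c" "c < p"
  have Dzs: "sdelta 1 z \<in> Sig p" using p_gt1 by (simp add: Sig_sdelta)
  have cd: "(sdelta 1 z, zzero) \<in> carrier (WR p)" using Dzs by (simp add: WR_carrier)
  have Pe: "P p (nat c) (sdelta 1 z, zzero) = (sdelta c z, zzero)"
  proof -
    have "fst (P p (nat c) (sdelta 1 z, zzero)) = sdelta c z"
      using c by (auto simp: P_fst0 sdelta_def fun_eq_iff)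
    moreover have "snd (P p (nat c) (sdelta 1 z, zzero)) = zzero" by (simp add: P_snd zzero_def)
    ultimately show ?thesis by (simp add: prod_eq_iff)
  qed
  have "phi_res \<phi> (sdelta c z) = fst (\<phi> (P p (nat c) (sdelta 1 z, zzero)))"
    using Pe by (simp add: phi_res_def)
  also have "\<dots> = fst (P p (nat c) (sdelta m (phi_bar \<phi> z), zzero))"
    using phi_P[OF cd] phi_Sig[OF Dzs] phi_delta1 by simp
  also have "\<dots> = (\<lambda>w. if w = phi_bar \<phi> z then (c * m) mod p else 0)"
    using c by (auto simp: P_fst0 sdelta_def fun_eq_iff)
  finally show ?thesis .
qed

lemma phi_formula: "finite F \<Longrightarrow> \<forall>h\<in>Sig p. {z. h z \<noteq> 0} \<subseteq> F \<longrightarrow>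
   (\<forall>z. phi_res \<phi> h (phi_bar \<phi> z) = (m * h z) mod p) \<and>
   (\<forall>w. w \<notin> range (phi_bar \<phi>) \<longrightarrow> phi_res \<phi> h w = 0)"
proof (induction F rule: finite_induct)
  case empty
  show ?case
  proof (intro ballI impI)
    fix h :: "'k sig" assume "h \<in> Sig p" "{z. h z \<noteq> 0} \<subseteq> {}"
    then have h0: "h = sdelta 0 zzero" by (auto simp: sdelta_def fun_eq_iff)
    show "(\<forall>z. phi_res \<phi> h (phi_bar \<phi> z) = (m * h z) mod p) \<and>
      (\<forall>w. w \<notin> range (phi_bar \<phi>) \<longrightarrow> phi_res \<phi> h w = 0)"
      using p_pos by (simp add: h0 phi_delta) (simp add: sdelta_def)
  qed
next
  case (insert a F)
  show ?case
  proof (intro ballI impI)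
    fix h :: "'k sig" assume hS: "h \<in> Sig p" and sup: "{z. h z \<noteq> 0} \<subseteq> insert a F"
    define h' where "h' = h(a := 0)"
    have hr: "\<And>w. 0 \<le> h w \<and> h w < p" using hS by (simp add: Sig_def)
    have h's: "h' \<in> Sig p" using hS p_pos unfolding h'_def Sig_def
      by (auto intro: finite_subset[of _ "{z. h z \<noteq> 0}"])
    have h'sup: "{z. h' z \<noteq> 0} \<subseteq> F" using sup by (auto simp: h'_def)
    have IH: "(\<forall>z. phi_res \<phi> h' (phi_bar \<phi> z) = (m * h' z) mod p) \<and>
      (\<forall>w. w \<notin> range (phi_bar \<phi>) \<longrightarrow> phi_res \<phi> h' w = 0)"
      using insert.IH h's h'sup by blast
    have ds: "sdelta (h a) a \<in> Sig p" using hr by (simp add: Sig_sdelta)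
    have hsum: "h = sadd p h' (sdelta (h a) a)"
    proof (rule ext)
      fix w show "h w = sadd p h' (sdelta (h a) a) w"
        using hr[of w] by (cases "w = a") (simp_all add: sadd_def h'_def sdelta_def)
    qed
    have ph: "phi_res \<phi> h = sadd p (phi_res \<phi> h') (phi_res \<phi> (sdelta (h a) a))"
      using phi_res_add[OF h's ds] hsum by simp
    have pd: "phi_res \<phi> (sdelta (h a) a) = (\<lambda>w. if w = phi_bar \<phi> a then (h a * m) mod p else 0)"
      using hr by (simp add: phi_delta)
    show "(\<forall>z. phi_res \<phi> h (phi_bar \<phi> z) = (m * h z) mod p) \<and>
      (\<forall>w. w \<notin> range (phi_bar \<phi>) \<longrightarrow> phi_res \<phi> h w = 0)"
    proof (intro conjI allI impI)
      fix z
      show "phi_res \<phi> h (phi_bar \<phi> z) = (m * h z) mod p"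
      proof (cases "z = a")
        case True
        then show ?thesis using IH by (simp add: ph pd sadd_def h'_def mult.commute)
      next
        case False
        then have "phi_bar \<phi> z \<noteq> phi_bar \<phi> a" using f_inj by (meson injD)
        then show ?thesis using IH False by (simp add: ph pd sadd_def h'_def)
      qed
    next
      fix w assume w: "w \<notin> range (phi_bar \<phi>)"
      then have "w \<noteq> phi_bar \<phi> a" by auto
      then show "phi_res \<phi> h w = 0" using IH w by (simp add: ph pd sadd_def)
    qed
  qed
qed

end

lemma prime_not_dvd_aux:
  assumes "prime (p::int)" "m \<in> {1..<p}" "0 < c" "c < p"
  shows "\<not> p dvd (m * c)"
proof
  assume "p dvd m * c"
  then have "p dvd m \<or> p dvd c" using assms(1) by (simp add: prime_dvd_mult_iff)
  then show False using assms zdvd_not_zless by auto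
qed

theorem lemma3p2:
  fixes p m :: int
    and \<phi> :: "('k::finite) sig \<times> 'k zk \<Rightarrow> 'k sig \<times> 'k zk"
    and x :: "'k zk"
  assumes "prime p"
    and "\<phi> \<in> iso (WR p) (WR p)"
    and "m \<in> {1..<p}"
    and "phi_res \<phi> (sdelta 1 zzero) = sdelta m zzero"
    and "infinite (zorbit (phi_bar \<phi>) x)"
  shows "(\<lambda>h. ssub p h (phi_res \<phi> h)) ` Bsub p (zorbit (phi_bar \<phi>) x)
           \<noteq> Bsub p (zorbit (phi_bar \<phi>) x)"
proof
  define f where "f = phi_bar \<phi>"
  define Orb where "Orb = zorbit f x"
  define B where "B = Bsub p Orb"
  have p1: "1 < p" using assms(1) prime_gt_1_int by blast
  have finj: "inj f" using f_inj[OF assms(1-4)] by (simp add: f_def)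
  assume eq: "(\<lambda>h. ssub p h (phi_res \<phi> h)) ` Bsub p (zorbit (phi_bar \<phi>) x)
           = Bsub p (zorbit (phi_bar \<phi>) x)"
  have xO: "x \<in> Orb" unfolding Orb_def zorbit_def by (auto intro: exI[of _ 0])
  have "sdelta 1 x \<in> B" using xO p1 Sig_sdelta[of 1 p x] by (auto simp: B_def Bsub_def sdelta_def)
  then obtain h where hB: "h \<in> B" and hx: "ssub p h (phi_res \<phi> h) = sdelta 1 x"
    using eq unfolding B_def Orb_def f_def by (metis (no_types, lifting) imageE)
  have hS: "h \<in> Sig p" using hB by (simp add: B_def Bsub_def)
  define S where "S = {z. h z \<noteq> 0}"
  have Sfin: "finite S" using hS by (simp add: S_def Sig_def)
  have SO: "S \<subseteq> Orb" using hB by (simp add: S_def B_def Bsub_def)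
  have hr: "\<And>w. 0 \<le> h w \<and> h w < p" using hS by (simp add: Sig_def)
  have form: "(\<forall>z. phi_res \<phi> h (f z) = (m * h z) mod p) \<and>
      (\<forall>w. w \<notin> range f \<longrightarrow> phi_res \<phi> h w = 0)"
    using phi_formula[OF assms(1-4) Sfin] hS by (simp add: S_def f_def)
  have E: "\<And>w. (h w - phi_res \<phi> h w) mod p = (if w = x then 1 else 0)"
    using hx by (simp add: ssub_def sdelta_def fun_eq_iff)
  have E1: "\<And>z. (h (f z) - (m * h z) mod p) mod p = (if f z = x then 1 else 0)"
  proof -
    fix z
    have "phi_res \<phi> h (f z) = (m * h z) mod p" using form by blast
    then show "(h (f z) - (m * h z) mod p) mod p = (if f z = x then 1 else 0)" using E[of "f z"] by simp
  qed
  have E2: "\<And>w. w \<notin> range f \<Longrightarrow> h w = (if w = x then 1 else 0)"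
  proof -
    fix w assume "w \<notin> range f"
    then have "phi_res \<phi> h w = 0" using form by blast
    then have "(h w - 0) mod p = (if w = x then 1 else 0)" using E[of w] by simp
    then show "h w = (if w = x then 1 else 0)" using hr[of w] by simp
  qed
  have nd: "\<And>z. h z \<noteq> 0 \<Longrightarrow> \<not> p dvd (m * h z)"
  proof -
    fix z assume "h z \<noteq> 0"
    then have "0 < h z" using hr[of z] by linarith
    then show "\<not> p dvd (m * h z)" using prime_not_dvd_aux[OF assms(1) assms(3)] hr[of z] by blast
  qed
  have cardeq: "card (f ` S) = card S" using finj by (simp add: card_image inj_on_subset)
  show False
  proof (cases "f ` S \<subseteq> S")
    case True
    have fS: "f ` S = S" using card_subset_eq[OF Sfin True cardeq] .
    have Sne: "S \<noteq> {}"
    proof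
      assume "S = {}"
      then have h0: "\<And>w. h w = 0" by (auto simp: S_def)
      have "phi_res \<phi> h x = 0"
      proof (cases "x \<in> range f")
        case True then obtain z where "x = f z" by blast
        then show ?thesis using form h0 by simp
      next
        case False then show ?thesis using form by simp
      qed
      then show False using E[of x] h0 by simp
    qed
    have fwd: "\<And>n y. y \<in> S \<Longrightarrow> (f ^^ n) y \<in> S"
    proof -
      fix n y assume "y \<in> S" then show "(f ^^ n) y \<in> S" 
    proof (induction n)
      case 0 then show ?case by simp
    next
      case (Suc n) then show ?case using True by auto
    qed
    qed
    have bwd: "\<And>n y. (f ^^ n) y \<in> S \<Longrightarrow> y \<in> S"
    proof -
      fix n show "\<And>y. (f ^^ n) y \<in> S \<Longrightarrow> y \<in> S"
      proof (induction n)
        case 0 then show ?case by simp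
      next
        case (Suc n)
        then have "f y \<in> S" by (simp add: funpow_Suc_right del: funpow.simps)
        then have "f y \<in> f ` S" using fS by simp
        then show ?case using finj by (auto dest: injD)
      qed
    qed
    obtain z where zS: "z \<in> S" using Sne by blast
    then have "z \<in> Orb" using SO by blast
    then obtain n where "(f ^^ n) x = z \<or> (f ^^ n) z = x" by (auto simp: Orb_def zorbit_def)
    then have xS: "x \<in> S" using zS fwd bwd by blast
    have "Orb \<subseteq> S"
    proof
      fix y assume "y \<in> Orb"
      then obtain n where "(f ^^ n) x = y \<or> (f ^^ n) y = x" by (auto simp: Orb_def zorbit_def)
      then show "y \<in> S" using xS fwd bwd by blast
    qed
    then have "finite Orb" using Sfin finite_subset by blast
    then show False using assms(5) by (simp add: Orb_def f_def)
  next
    case False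
    then obtain z1 where z1: "z1 \<in> S" "f z1 \<notin> S" by blast
    have hz1: "h (f z1) = 0" using z1 by (simp add: S_def)
    have fz1: "f z1 = x"
    proof (rule ccontr)
      assume "f z1 \<noteq> x"
      then have "(0 - (m * h z1) mod p) mod p = 0" using E1[of z1] hz1 by simp
      then have "p dvd (m * h z1)" by (rule neg_mod_dvd)
      then show False using nd z1 by (simp add: S_def)
    qed
    have "\<not> S \<subseteq> f ` S"
    proof
      assume "S \<subseteq> f ` S"
      then have "S = f ` S" using card_subset_eq[of "f ` S" S] Sfin cardeq by simp
      then show False using False by simp
    qed
    then obtain z0 where z0: "z0 \<in> S" "z0 \<notin> f ` S" by blast
    have "z0 = x"
    proof (cases "z0 \<in> range f")
      case True
      then obtain u where u: "z0 = f u" by blast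
      then have "u \<notin> S" using z0 by blast
      then have "h u = 0" by (simp add: S_def)
      then have "h z0 mod p = (if z0 = x then 1 else 0)" using E1[of u] u by simp
      then show ?thesis using hr[of z0] z0 by (simp add: S_def split: if_splits)
    next
      case False
      then show ?thesis using E2 z0 by (simp add: S_def split: if_splits)
    qed
    then show False using z0 fz1 z1 by blast
  qed
qed

end
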